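(* For every $T\ge1$ and $\tau_0\in\{1,\dots,T\}$ there exist parameters $\eta>0$ and $\alpha\in[0,1]$ (depending on $\tau_0$, $T$ and $d$) such that the fixed-share algorithm with these parameters satisfies, for all loss vectors $\ell_1,\dots,\ell_T\in[0,1]^d$, \[ \mathcal R_T^{\tau_0\text{-adapt}}\le\sqrt{\frac{\tau_0}{2}\Big(\tau_0\,h\Big(\frac1{\tau_0}\Big)+\ln d\Big)}\le\sqrt{\frac{\tau_0}{2}\ln(ed\tau_0)}. \]
   Context: Let $d\ge1$ and $\Delta_d=\{q\in[0,1]^d:\sum_{i=1}^d q_i=1\}$. The generalized share algorithm with learning rate $\eta>0$ and mixing functions $\psi_t:[0,1]^{td}\to\Delta_d$ ($t\ge2$) works as follows: $\hat p_1=v_1=(1/d,\dots,1/d)$. At each round $t=1,2,\dots$ it predicts $\hat p_t=(\hat p_{1,t},\dots,\hat p_{d,t})\in\Delta_d$, observes a loss vector $\ell_t=(\ell_{1,t},\dots,\ell_{d,t})\in[0,1]^d$ (arbitrary), and suffers loss $\hat p_t^\top\ell_t$. It then forms the pre-weights $v_{j,t+1}=\hat p_{j,t}e^{-\eta\ell_{j,t}}/\sum_{i=1}^d\hat p_{i,t}e^{-\eta\ell_{i,t}}$ for $j=1,\dots,d$, sets $v_{t+1}=(v_{1,t+1},\dots,v_{d,t+1})$, and defines $\hat p_{t+1}=\psi_{t+1}(V_{t+1})$ where $V_{t+1}=[v_{i,s}]_{1\le i\le d,1\le s\le t+1}$ is the $d\times(t+1)$ matrix of all pre-weights so far. The fixed-share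 algorithm with parameters $\eta>0$, $\alpha\in[0,1]$ is the generalized share algorithm with the mixing rule $\hat p_{j,t+1}=\alpha/d+(1-\alpha)v_{j,t+1}$ for all $j$ and $t\ge1$. The $\tau_0$-adaptive regret is $\mathcal R_T^{\tau_0\text{-adapt}}=\max\big\{\sum_{t=r}^s\hat p_t^\top\ell_t-\min_{q\in\Delta_d}\sum_{t=r}^sq^\top\ell_t\big\}$, the maximum over integers $1\le r\le s\le T$ with $s+1-r\le\tau_0$. $h(x)=-x\ln x-(1-x)\ln(1-x)$ is the binary entropy on $[0,1]$ (with $0\ln0=0$). *)

theory Defs
  imports Complex_Main
begin

(* Experts are indexed 0..d-1; rounds are indexed 1,2,...
   A loss sequence is l :: nat => nat => real, with l t j the loss of expert j at round t.
   A weight vector is p :: nat => real, only p j for j < d matters. *)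

definition simplex :: "nat \<Rightarrow> (nat \<Rightarrow> real) set" where
  "simplex d = {q. (\<forall>j<d. 0 \<le> q j \<and> q j \<le> 1) \<and> (\<Sum>j<d. q j) = 1}"

definition uniform_weights :: "nat \<Rightarrow> nat \<Rightarrow> real" where
  "uniform_weights d = (\<lambda>j. 1 / real d)"

definition ew_update :: "nat \<Rightarrow> real \<Rightarrow> (nat \<Rightarrow> real) \<Rightarrow> (nat \<Rightarrow> real) \<Rightarrow> nat \<Rightarrow> real" where
  "ew_update d \<eta> p lt = (\<lambda>j. p j * exp (- \<eta> * lt j) / (\<Sum>i<d. p i * exp (- \<eta> * lt i)))"

(* fixed-share predictions: fixed_share d \<eta> \<alpha> l t = \<hat>p_t for t \<ge> 1
   (the value at t = 0 is an unused dummy, equal to the uniform vector) *)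
primrec fixed_share :: "nat \<Rightarrow> real \<Rightarrow> real \<Rightarrow> (nat \<Rightarrow> nat \<Rightarrow> real) \<Rightarrow> nat \<Rightarrow> nat \<Rightarrow> real" where
  "fixed_share d \<eta> \<alpha> l 0 = uniform_weights d"
| "fixed_share d \<eta> \<alpha> l (Suc t) =
     (if t = 0 then uniform_weights d
      else (\<lambda>j. \<alpha> / real d + (1 - \<alpha>) * ew_update d \<eta> (fixed_share d \<eta> \<alpha> l t) (l t) j))"

definition interval_loss :: "nat \<Rightarrow> (nat \<Rightarrow> nat \<Rightarrow> real) \<Rightarrow> (nat \<Rightarrow> real) \<Rightarrow> nat \<Rightarrow> nat \<Rightarrow> real" where
  "interval_loss d l q r s = (\<Sum>t=r..s. \<Sum>j<d. q j * l t j)"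

definition fs_interval_regret :: "nat \<Rightarrow> real \<Rightarrow> real \<Rightarrow> (nat \<Rightarrow> nat \<Rightarrow> real) \<Rightarrow> nat \<Rightarrow> nat \<Rightarrow> real" where
  "fs_interval_regret d \<eta> \<alpha> l r s =
     (\<Sum>t=r..s. \<Sum>j<d. fixed_share d \<eta> \<alpha> l t j * l t j)
     - (INF q\<in>simplex d. interval_loss d l q r s)"

definition fs_adaptive_regret :: "nat \<Rightarrow> real \<Rightarrow> real \<Rightarrow> (nat \<Rightarrow> nat \<Rightarrow> real) \<Rightarrow> nat \<Rightarrow> nat \<Rightarrow> real" where
  "fs_adaptive_regret d \<eta> \<alpha> l T \<tau>0 =
     Max {fs_interval_regret d \<eta> \<alpha> l r s | r s. 1 \<le> r \<and> r \<le> s \<and> s \<le> T \<and> s + 1 - r \<le> \<tau>0}"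

definition xlnx :: "real \<Rightarrow> real" where
  "xlnx x = (if x = 0 then 0 else x * ln x)"

definition bin_entropy :: "real \<Rightarrow> real" where
  "bin_entropy x = - xlnx x - xlnx (1 - x)"

end

theory Submission imports Defs "HOL-Probability.Hoeffding" begin

lemma hoeff:
  fixes p x :: "nat \<Rightarrow> real" and \<eta> :: real
  assumes p0: "\<forall>j<d. 0 \<le> p j" and p1: "(\<Sum>j<d. p j) = 1"
    and x: "\<forall>j<d. 0 \<le> x j \<and> x j \<le> 1" and eta: "\<eta> > 0"
  shows "(\<Sum>j<d. p j * x j) \<le> - ln (\<Sum>j<d. p j * exp (- \<eta> * x j)) / \<eta> + \<eta> / 8"
proof -
  define m where "m = (\<Sum>j<d. p j * x j)"
  define S where "S = (\<Sum>j<d. p j * exp (- \<eta> * x j))"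
  have m0: "0 \<le> m" unfolding m_def using p0 x by (intro sum_nonneg) auto
  have m1: "m \<le> 1"
  proof -
    have "m \<le> (\<Sum>j<d. p j * 1)" unfolding m_def using p0 x by (intro sum_mono mult_left_mono) auto
    then show ?thesis using p1 by simp
  qed
  have conv: "exp (- \<eta> * y) \<le> (1 - y) + y * exp (- \<eta>)" if "0 \<le> y" "y \<le> 1" for y
  proof -
    have "exp (\<eta> * ((1 - y) *\<^sub>R 0 + y *\<^sub>R (-1))) \<le> (1 - y) * exp (\<eta> * 0) + y * exp (\<eta> * (-1))"
      using that eta by (intro convex_onD[OF convex_on_exp]) auto
    then show ?thesis by simp
  qed
  have S_le: "S \<le> (\<Sum>j<d. p j * ((1 - x j) + x j * exp (- \<eta>)))"
    unfolding S_def using p0 x conv by (intro sum_mono mult_left_mono) auto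
  also have "\<dots> = 1 - m + m * exp (- \<eta>)"
  proof -
    have e: "(\<Sum>j<d. p j * (x j * exp (- \<eta>))) = exp (- \<eta>) * (\<Sum>j<d. p j * x j)"
      by (simp add: sum_distrib_left mult_ac)
    show ?thesis
      unfolding m_def using p1 e
      by (simp add: algebra_simps sum.distrib sum_subtractf)
  qed
  finally have S_le': "S \<le> 1 - m + m * exp (- \<eta>)" .
  have S_ge: "S \<ge> (\<Sum>j<d. p j * exp (- \<eta>))"
    unfolding S_def using p0 x eta by (intro sum_mono mult_left_mono) auto
  have "(\<Sum>j<d. p j * exp (- \<eta>)) = exp (- \<eta>)" using p1 by (simp add: sum_distrib_right[symmetric])
  with S_ge have Spos: "S > 0" by (metis exp_gt_zero order_less_le_trans)
  have "ln S \<le> ln (1 - m + m * exp (- \<eta>))" using Spos S_le' by simp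
  also have "1 - m + m * exp (- \<eta>) = exp (- \<eta>) * (1 + (1 - m) * (exp \<eta> - 1))"
    by (simp add: algebra_simps exp_minus field_simps)
  also have "ln \<dots> = - \<eta> + ln (1 + (1 - m) * (exp \<eta> - 1))"
  proof -
    have "1 + (1 - m) * (exp \<eta> - 1) > 0" using m1 eta
      by (smt (verit) exp_ge_add_one_self mult_nonneg_nonneg)
    then show ?thesis by (simp add: ln_mult)
  qed
  also have "\<dots> \<le> - \<eta> + (\<eta> * (1 - m) + \<eta>\<^sup>2 / 8)"
    using Hoeffdings_lemma_aux[of \<eta> "1 - m"] eta m1 by simp
  finally have "ln S \<le> - \<eta> * m + \<eta>\<^sup>2 / 8" by (simp add: algebra_simps)
  then have "\<eta> * m \<le> - ln S + \<eta>\<^sup>2 / 8" by simp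
  then have "m \<le> (- ln S + \<eta>\<^sup>2 / 8) / \<eta>" using eta by (simp add: field_simps)
  also have "\<dots> = - ln S / \<eta> + \<eta> / 8" using eta by (simp add: field_simps power2_eq_square)
  finally show ?thesis unfolding m_def S_def .
qed

lemma fs_basic:
  assumes d: "d \<ge> 1" and a0: "0 < \<alpha>" and a1: "\<alpha> \<le> 1"
  shows "(\<forall>j<d. \<alpha> / real d \<le> fixed_share d \<eta> \<alpha> l t j) \<and> (\<Sum>j<d. fixed_share d \<eta> \<alpha> l t j) = 1"
proof (induction t)
  case 0
  have "\<alpha> / real d \<le> 1 / real d" using a1 d by (simp add: divide_right_mono)
  then show ?case using d by (simp add: uniform_weights_def)
next
  case (Suc t)
  show ?case
  proof (cases "t = 0")
    case True
    have "\<alpha> / real d \<le> 1 / real d" using a1 d by (simp add: divide_right_mono)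
    then show ?thesis using d True by (simp add: uniform_weights_def)
  next
    case False
    define p where "p = fixed_share d \<eta> \<alpha> l t"
    define W where "W = (\<Sum>i<d. p i * exp (- \<eta> * l t i))"
    have ppos: "\<forall>j<d. p j > 0" using Suc.IH a0 d unfolding p_def
      by (meson divide_pos_pos of_nat_0_less_iff order_less_le_trans less_le_trans zero_less_one le_trans)
    have Wpos: "W > 0" unfolding W_def
      using ppos d by (intro sum_pos) (auto simp: lessThan_empty_iff)
    have ewnn: "\<forall>j<d. ew_update d \<eta> p (l t) j \<ge> 0"
      using ppos Wpos unfolding ew_update_def W_def[symmetric] by (auto intro!: divide_nonneg_pos)
    have ewsum: "(\<Sum>j<d. ew_update d \<eta> p (l t) j) = 1"
      using Wpos unfolding ew_update_def W_def[symmetric] by (simp add: sum_divide_distrib[symmetric] W_def)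
    have "\<forall>j<d. \<alpha> / real d \<le> \<alpha> / real d + (1 - \<alpha>) * ew_update d \<eta> p (l t) j"
      using ewnn a1 by auto
    moreover have "(\<Sum>j<d. \<alpha> / real d + (1 - \<alpha>) * ew_update d \<eta> p (l t) j) = 1"
      using d ewsum by (simp add: sum.distrib sum_distrib_left[symmetric])
    ultimately show ?thesis using False by (simp add: p_def)
  qed
qed

lemma ew_facts:
  fixes l :: "nat \<Rightarrow> nat \<Rightarrow> real" and t :: nat and \<eta> :: real
  assumes d: "d \<ge> 1" and a0: "0 < \<alpha>" and a1: "\<alpha> \<le> 1" and j: "j < d"
  defines "p \<equiv> fixed_share d \<eta> \<alpha> l t"
  defines "W \<equiv> (\<Sum>i<d. p i * exp (- \<eta> * l t i))"
  shows "W > 0" "p j > 0" "ew_update d \<eta> p (l t) j > 0" "ew_update d \<eta> p (l t) j \<le> 1"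
    "ew_update d \<eta> p (l t) j = p j * exp (- \<eta> * l t j) / W"
proof -
  have ppos: "\<forall>j<d. p j > 0" using fs_basic[OF d a0 a1, of \<eta> l t] a0 d unfolding p_def
    by (meson divide_pos_pos of_nat_0_less_iff order_less_le_trans less_le_trans zero_less_one le_trans)
  then show Wpos: "W > 0" unfolding W_def
    using d by (intro sum_pos) (auto simp: lessThan_empty_iff)
  show "p j > 0" using ppos j by simp
  show e: "ew_update d \<eta> p (l t) j = p j * exp (- \<eta> * l t j) / W"
    unfolding ew_update_def W_def by simp
  show "ew_update d \<eta> p (l t) j > 0" using e Wpos ppos j by simp
  have "p j * exp (- \<eta> * l t j) \<le> W" unfolding W_def
    using ppos j by (intro member_le_sum) (auto intro: less_imp_le)
  then show "ew_update d \<eta> p (l t) j \<le> 1" using e Wpos by simp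
qed

lemma round_bound:
  fixes l :: "nat \<Rightarrow> nat \<Rightarrow> real" and t :: nat and \<eta> :: real
  assumes d: "d \<ge> 1" and a0: "0 < \<alpha>" and a1: "\<alpha> \<le> 1" and j: "j < d" and eta: "\<eta> > 0"
    and lt: "\<forall>i<d. 0 \<le> l t i \<and> l t i \<le> 1"
  defines "p \<equiv> fixed_share d \<eta> \<alpha> l t"
  shows "(\<Sum>i<d. p i * l t i) \<le> l t j + (ln (ew_update d \<eta> p (l t) j) - ln (p j)) / \<eta> + \<eta> / 8"
proof -
  define W where "W = (\<Sum>i<d. p i * exp (- \<eta> * l t i))"
  note F = ew_facts[OF d a0 a1 j, of \<eta> l t, folded p_def, folded W_def]
  have h: "(\<Sum>i<d. p i * l t i) \<le> - ln W / \<eta> + \<eta> / 8"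
    unfolding W_def
    using hoeff[of d p "l t" \<eta>] fs_basic[OF d a0 a1, of \<eta> l t] lt eta a0 d unfolding p_def
    by (smt (verit, ccfv_SIG) divide_nonneg_nonneg of_nat_0_le_iff)
  have "ln (ew_update d \<eta> p (l t) j) = ln (p j) + (- \<eta> * l t j) - ln W"
    using F by (simp add: ln_div ln_mult)
  then have "- ln W = ln (ew_update d \<eta> p (l t) j) - ln (p j) + \<eta> * l t j" by simp
  then have "- ln W / \<eta> = l t j + (ln (ew_update d \<eta> p (l t) j) - ln (p j)) / \<eta>"
    using eta by (simp add: field_simps)
  with h show ?thesis by simp
qed

lemma mix_step:
  fixes l :: "nat \<Rightarrow> nat \<Rightarrow> real" and n :: nat and \<eta> :: real
  assumes d: "d \<ge> 1" and a0: "0 < \<alpha>" and a1: "\<alpha> < 1" and j: "j < d" and n: "n \<ge> 1"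
  shows "ln (ew_update d \<eta> (fixed_share d \<eta> \<alpha> l n) (l n) j)
     \<le> ln (fixed_share d \<eta> \<alpha> l (Suc n) j) + (- ln (1 - \<alpha>))"
proof -
  define e where "e = ew_update d \<eta> (fixed_share d \<eta> \<alpha> l n) (l n) j"
  have epos: "e > 0" using ew_facts(3)[OF d a0 _ j, of \<eta> l n] a1 unfolding e_def by simp
  have P: "fixed_share d \<eta> \<alpha> l (Suc n) j = \<alpha> / real d + (1 - \<alpha>) * e"
    using n unfolding e_def by simp
  have "(1 - \<alpha>) * e \<le> fixed_share d \<eta> \<alpha> l (Suc n) j" using P a0 d by simp
  then have "ln ((1 - \<alpha>) * e) \<le> ln (fixed_share d \<eta> \<alpha> l (Suc n) j)"
    using epos a1 by (intro ln_mono) auto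
  then show ?thesis using epos a1 unfolding e_def[symmetric] by (simp add: ln_mult)
qed

lemma interval_bound:
  fixes l :: "nat \<Rightarrow> nat \<Rightarrow> real" and \<eta> :: real
  assumes d: "d \<ge> 1" and a0: "0 < \<alpha>" and a1: "\<alpha> < 1" and j: "j < d" and eta: "\<eta> > 0"
    and r: "r \<ge> 1" and rs: "r \<le> s" and L: "\<forall>t\<in>{r..s}. \<forall>i<d. 0 \<le> l t i \<and> l t i \<le> 1"
  shows "(\<Sum>t=r..s. \<Sum>i<d. fixed_share d \<eta> \<alpha> l t i * l t i) \<le> (\<Sum>t=r..s. l t j)
     + (ln (ew_update d \<eta> (fixed_share d \<eta> \<alpha> l s) (l s) j) - ln (fixed_share d \<eta> \<alpha> l r j)
        + real (s - r) * (- ln (1 - \<alpha>))) / \<eta> + real (s - r + 1) * \<eta> / 8"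
  using rs L
proof (induction s rule: dec_induct)
  case base
  show ?case using round_bound[OF d a0 _ j eta, of l r] a1 base by simp
next
  case (step n)
  have IH: "(\<Sum>t=r..n. \<Sum>i<d. fixed_share d \<eta> \<alpha> l t i * l t i) \<le> (\<Sum>t=r..n. l t j)
     + (ln (ew_update d \<eta> (fixed_share d \<eta> \<alpha> l n) (l n) j) - ln (fixed_share d \<eta> \<alpha> l r j)
        + real (n - r) * (- ln (1 - \<alpha>))) / \<eta> + real (n - r + 1) * \<eta> / 8"
    using step by auto
  have R: "(\<Sum>i<d. fixed_share d \<eta> \<alpha> l (Suc n) i * l (Suc n) i) \<le> l (Suc n) j
     + (ln (ew_update d \<eta> (fixed_share d \<eta> \<alpha> l (Suc n)) (l (Suc n)) j) - ln (fixed_share d \<eta> \<alpha> l (Suc n) j)) / \<eta> + \<eta> / 8"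
    using round_bound[OF d a0 _ j eta, of l "Suc n"] a1 step by simp
  have M: "ln (ew_update d \<eta> (fixed_share d \<eta> \<alpha> l n) (l n) j)
     \<le> ln (fixed_share d \<eta> \<alpha> l (Suc n) j) + (- ln (1 - \<alpha>))"
    using mix_step[OF d a0 a1 j, of n \<eta> l] step r by simp
  have sums: "(\<Sum>t=r..Suc n. f t) = (\<Sum>t=r..n. f t) + f (Suc n)" for f :: "nat \<Rightarrow> real"
    using step by (simp add: sum.cl_ivl_Suc)
  have rn: "real (Suc n - r) = real (n - r) + 1" "real (Suc n - r + 1) = real (n - r + 1) + 1"
    using step by auto
  define A where "A = ln (ew_update d \<eta> (fixed_share d \<eta> \<alpha> l n) (l n) j)"
  define B where "B = ln (fixed_share d \<eta> \<alpha> l (Suc n) j)"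
  define c where "c = - ln (1 - \<alpha>)"
  have M': "A \<le> B + c" using M unfolding A_def B_def c_def .
  define A' where "A' = ln (ew_update d \<eta> (fixed_share d \<eta> \<alpha> l (Suc n)) (l (Suc n)) j)"
  define Pr where "Pr = ln (fixed_share d \<eta> \<alpha> l r j)"
  define k where "k = real (n - r)"
  have "A / \<eta> \<le> (B + c) / \<eta>" using M' eta by (simp add: divide_right_mono)
  then have M2: "A / \<eta> \<le> B / \<eta> + c / \<eta>" by (simp add: add_divide_distrib)
  have e1: "(A - Pr + k * c) / \<eta> = A / \<eta> - Pr / \<eta> + k * (c / \<eta>)"
    by (simp add: add_divide_distrib diff_divide_distrib)
  have e2: "(A' - Pr + (k + 1) * c) / \<eta> = A' / \<eta> - Pr / \<eta> + k * (c / \<eta>) + c / \<eta>"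
    by (simp add: add_divide_distrib diff_divide_distrib distrib_right)
  have e3: "(A' - B) / \<eta> = A' / \<eta> - B / \<eta>" by (simp add: diff_divide_distrib)
  have e4: "(k' + 1) * \<eta> / 8 = k' * \<eta> / 8 + \<eta> / 8" for k' :: real by (simp add: field_simps)
  have IH': "(\<Sum>t=r..n. \<Sum>i<d. fixed_share d \<eta> \<alpha> l t i * l t i) \<le> (\<Sum>t=r..n. l t j)
     + (A - Pr + k * c) / \<eta> + real (n - r + 1) * \<eta> / 8"
    using IH unfolding A_def Pr_def k_def c_def .
  have R': "(\<Sum>i<d. fixed_share d \<eta> \<alpha> l (Suc n) i * l (Suc n) i) \<le> l (Suc n) j + (A' - B) / \<eta> + \<eta> / 8"
    using R unfolding A'_def B_def .
  have "(\<Sum>t=r..Suc n. \<Sum>i<d. fixed_share d \<eta> \<alpha> l t i * l t i) \<le> (\<Sum>t=r..Suc n. l t j)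
     + (A' - Pr + (k + 1) * c) / \<eta> + (real (n - r + 1) + 1) * \<eta> / 8"
    unfolding sums e1 e2 e4 using IH'[unfolded e1] R'[unfolded e3] M2 by linarith
  then show ?case unfolding rn A'_def Pr_def k_def c_def .
qed

lemma interval_final:
  fixes l :: "nat \<Rightarrow> nat \<Rightarrow> real" and \<eta> :: real and \<tau>0 :: nat
  assumes d: "d \<ge> 1" and tau: "\<tau>0 \<ge> 1" and j: "j < d" and eta: "\<eta> > 0"
    and r: "r \<ge> 1" and rs: "r \<le> s" and len: "s + 1 - r \<le> \<tau>0"
    and L: "\<forall>t\<in>{r..s}. \<forall>i<d. 0 \<le> l t i \<and> l t i \<le> 1"
  shows "(\<Sum>t=r..s. \<Sum>i<d. fixed_share d \<eta> (1 / real \<tau>0) l t i * l t i) \<le> (\<Sum>t=r..s. l t j)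
     + (ln (real d) + ln (real \<tau>0) + (real \<tau>0 - 1) * (- ln (1 - 1 / real \<tau>0))) / \<eta> + real \<tau>0 * \<eta> / 8"
proof -
  define \<alpha> where "\<alpha> = 1 / real \<tau>0"
  have a0: "0 < \<alpha>" and a1: "\<alpha> \<le> 1" using tau by (auto simp: \<alpha>_def)
  define c where "c = - ln (1 - 1 / real \<tau>0)"
  have c0: "c \<ge> 0"
  proof (cases "\<tau>0 = 1")
    case True then show ?thesis by (simp add: c_def)
  next
    case False
    then have "1 - 1 / real \<tau>0 > 0" "1 - 1 / real \<tau>0 \<le> 1" using tau by auto
    then show ?thesis unfolding c_def by simp
  qed
  define N where "N = ln (real d) + ln (real \<tau>0)"
  have Pr: "\<alpha> / real d \<le> fixed_share d \<eta> \<alpha> l r j" using fs_basic[OF d a0 a1, of \<eta> l r] j by auto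
  have "\<alpha> / real d = 1 / (real d * real \<tau>0)" by (simp add: \<alpha>_def)
  moreover have "1 / (real d * real \<tau>0) > 0" using d tau by simp
  ultimately have "- ln (fixed_share d \<eta> \<alpha> l r j) \<le> - ln (1 / (real d * real \<tau>0))"
    using Pr by (smt (verit) ln_mono)
  also have "\<dots> = N" unfolding N_def using d tau by (simp add: ln_div ln_mult)
  finally have lnP: "- ln (fixed_share d \<eta> \<alpha> l r j) \<le> N" .
  have lnE: "ln (ew_update d \<eta> (fixed_share d \<eta> \<alpha> l s) (l s) j) \<le> 0"
    using ew_facts(3,4)[OF d a0 a1 j, of \<eta> l s] by simp
  have K: "ln (ew_update d \<eta> (fixed_share d \<eta> \<alpha> l s) (l s) j) - ln (fixed_share d \<eta> \<alpha> l r j)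
            + real (s - r) * c \<le> N + (real \<tau>0 - 1) * c"
  proof -
    have "real (s - r) \<le> real \<tau>0 - 1" using len rs by linarith
    then have "real (s - r) * c \<le> (real \<tau>0 - 1) * c" using c0 by (simp add: mult_right_mono)
    then show ?thesis using lnP lnE by linarith
  qed
  have Kd: "(ln (ew_update d \<eta> (fixed_share d \<eta> \<alpha> l s) (l s) j) - ln (fixed_share d \<eta> \<alpha> l r j)
            + real (s - r) * c) / \<eta> \<le> (N + (real \<tau>0 - 1) * c) / \<eta>"
    using K eta by (simp add: divide_right_mono)
  have T8: "real (s - r + 1) * \<eta> / 8 \<le> real \<tau>0 * \<eta> / 8"
    using len rs eta by (intro divide_right_mono mult_right_mono) auto
  show ?thesis
  proof (cases "s = r")
    case True
    have "(\<Sum>t=r..s. \<Sum>i<d. fixed_share d \<eta> \<alpha> l t i * l t i) \<le> (\<Sum>t=r..s. l t j)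
     + (ln (ew_update d \<eta> (fixed_share d \<eta> \<alpha> l s) (l s) j) - ln (fixed_share d \<eta> \<alpha> l r j)
        + real (s - r) * c) / \<eta> + real (s - r + 1) * \<eta> / 8"
      using round_bound[OF d a0 a1 j eta, of l r] L True by simp
    then show ?thesis using Kd T8 unfolding \<alpha>_def c_def N_def by linarith
  next
    case False
    then have "\<tau>0 \<ge> 2" using len rs by linarith
    then have a1': "\<alpha> < 1" unfolding \<alpha>_def by simp
    have "(\<Sum>t=r..s. \<Sum>i<d. fixed_share d \<eta> \<alpha> l t i * l t i) \<le> (\<Sum>t=r..s. l t j)
     + (ln (ew_update d \<eta> (fixed_share d \<eta> \<alpha> l s) (l s) j) - ln (fixed_share d \<eta> \<alpha> l r j)
        + real (s - r) * c) / \<eta> + real (s - r + 1) * \<eta> / 8"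
      using interval_bound[OF d a0 a1' j eta r rs L] unfolding c_def \<alpha>_def by simp
    then show ?thesis using Kd T8 unfolding \<alpha>_def c_def N_def by linarith
  qed
qed

lemma regret_le:
  fixes l :: "nat \<Rightarrow> nat \<Rightarrow> real"
  assumes d: "d \<ge> 1"
    and H: "\<forall>j<d. (\<Sum>t=r..s. \<Sum>i<d. fixed_share d \<eta> \<alpha> l t i * l t i) \<le> (\<Sum>t=r..s. l t j) + B"
  shows "fs_interval_regret d \<eta> \<alpha> l r s \<le> B"
proof -
  define A where "A = (\<Sum>t=r..s. \<Sum>i<d. fixed_share d \<eta> \<alpha> l t i * l t i)"
  have ne: "Defs.simplex d \<noteq> {}"
  proof -
    have "uniform_weights d \<in> Defs.simplex d" using d
      by (simp add: Defs.simplex_def uniform_weights_def)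
    then show ?thesis by blast
  qed
  have "A - B \<le> (INF q\<in>Defs.simplex d. interval_loss d l q r s)"
  proof (rule cINF_greatest[OF ne])
    fix q assume q: "q \<in> Defs.simplex d"
    have "interval_loss d l q r s = (\<Sum>j<d. q j * (\<Sum>t=r..s. l t j))"
      unfolding interval_loss_def by (simp add: sum.swap[of _ "{r..s}"] sum_distrib_left)
    also have "\<dots> \<ge> (\<Sum>j<d. q j * (A - B))"
      using q H unfolding Defs.simplex_def A_def by (intro sum_mono mult_left_mono) auto
    moreover have "(\<Sum>j<d. q j * (A - B)) = A - B"
      using q unfolding Defs.simplex_def by (simp add: sum_distrib_right[symmetric])
    ultimately show "A - B \<le> interval_loss d l q r s" by linarith
  qed
  then show ?thesis unfolding fs_interval_regret_def A_def by linarith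
qed

lemma adaptive_le:
  assumes T: "T \<ge> 1" and tau: "\<tau>0 \<ge> 1"
    and H: "\<And>r s. 1 \<le> r \<Longrightarrow> r \<le> s \<Longrightarrow> s \<le> T \<Longrightarrow> s + 1 - r \<le> \<tau>0 \<Longrightarrow>
            fs_interval_regret d \<eta> \<alpha> l r s \<le> B"
  shows "fs_adaptive_regret d \<eta> \<alpha> l T \<tau>0 \<le> B"
proof -
  define S where "S = {fs_interval_regret d \<eta> \<alpha> l r s | r s. 1 \<le> r \<and> r \<le> s \<and> s \<le> T \<and> s + 1 - r \<le> \<tau>0}"
  have "S \<subseteq> (\<lambda>(r, s). fs_interval_regret d \<eta> \<alpha> l r s) ` ({1..T} \<times> {1..T})"
    unfolding S_def by auto
  then have fin: "finite S" by (rule finite_subset) auto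
  have "fs_interval_regret d \<eta> \<alpha> l 1 1 \<in> S" unfolding S_def using T tau by (auto intro!: exI[where x=1])
  then have ne: "S \<noteq> {}" by blast
  have "Max S \<le> B" using fin ne H unfolding S_def by (intro Max.boundedI) auto
  then show ?thesis unfolding fs_adaptive_regret_def S_def .
qed

lemma entropy_id:
  fixes \<tau>0 :: nat assumes tau: "\<tau>0 \<ge> 1"
  shows "real \<tau>0 * bin_entropy (1 / real \<tau>0) = ln (real \<tau>0) + (real \<tau>0 - 1) * (- ln (1 - 1 / real \<tau>0))"
proof (cases "\<tau>0 = 1")
  case True then show ?thesis by (simp add: bin_entropy_def xlnx_def)
next
  case False
  then have t2: "real \<tau>0 \<ge> 2" using tau by linarith
  then have ne: "1 / real \<tau>0 \<noteq> 0" "1 - 1 / real \<tau>0 \<noteq> 0" by auto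
  have "real \<tau>0 * bin_entropy (1 / real \<tau>0)
      = - (real \<tau>0 * (1 / real \<tau>0)) * ln (1 / real \<tau>0) - (real \<tau>0 * (1 - 1 / real \<tau>0)) * ln (1 - 1 / real \<tau>0)"
    using ne by (simp add: bin_entropy_def xlnx_def algebra_simps)
  also have "\<dots> = - ln (1 / real \<tau>0) - (real \<tau>0 - 1) * ln (1 - 1 / real \<tau>0)"
    using t2 by (simp add: algebra_simps)
  also have "ln (1 / real \<tau>0) = - ln (real \<tau>0)" using t2 by (simp add: ln_div)
  finally show ?thesis by simp
qed

lemma entropy_le:
  fixes \<tau>0 :: nat assumes tau: "\<tau>0 \<ge> 1"
  shows "(real \<tau>0 - 1) * (- ln (1 - 1 / real \<tau>0)) \<le> 1"
proof (cases "\<tau>0 = 1")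
  case True then show ?thesis by simp
next
  case False
  then have t2: "real \<tau>0 \<ge> 2" using tau by linarith
  define y where "y = 1 - 1 / real \<tau>0"
  have y: "y > 0" "y = (real \<tau>0 - 1) / real \<tau>0" using t2 by (auto simp: y_def field_simps)
  have "- ln y = ln (1 / y)" using y(1) by (simp add: ln_div)
  also have "\<dots> \<le> 1 / y - 1" using y(1) by (intro ln_le_minus_one) simp
  also have "1 / y - 1 = 1 / (real \<tau>0 - 1)" unfolding y(2) using t2 by (simp add: field_simps)
  finally have "- ln y \<le> 1 / (real \<tau>0 - 1)" .
  then have "(real \<tau>0 - 1) * (- ln y) \<le> (real \<tau>0 - 1) * (1 / (real \<tau>0 - 1))"
    using t2 by (intro mult_left_mono) auto
  then show ?thesis using t2 unfolding y_def by simp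
qed

theorem corollary2:
  fixes d T \<tau>0 :: nat
  assumes "d \<ge> 1" and "T \<ge> 1" and "1 \<le> \<tau>0" and "\<tau>0 \<le> T"
  shows "\<exists>\<eta> \<alpha>. \<eta> > 0 \<and> 0 \<le> \<alpha> \<and> \<alpha> \<le> 1 \<and>
     (\<forall>l :: nat \<Rightarrow> nat \<Rightarrow> real.
        (\<forall>t\<in>{1..T}. \<forall>j<d. 0 \<le> l t j \<and> l t j \<le> 1) \<longrightarrow>
        fs_adaptive_regret d \<eta> \<alpha> l T \<tau>0
          \<le> sqrt (real \<tau>0 / 2 * (real \<tau>0 * bin_entropy (1 / real \<tau>0) + ln (real d)))
        \<and> sqrt (real \<tau>0 / 2 * (real \<tau>0 * bin_entropy (1 / real \<tau>0) + ln (real d)))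
          \<le> sqrt (real \<tau>0 / 2 * ln (exp 1 * real d * real \<tau>0)))"
proof -
  note d = assms(1) and T = assms(2) and tau = assms(3) and tauT = assms(4)
  define c where "c = - ln (1 - 1 / real \<tau>0)"
  define C0 where "C0 = real \<tau>0 * bin_entropy (1 / real \<tau>0) + ln (real d)"
  have c0: "c \<ge> 0"
  proof (cases "\<tau>0 = 1")
    case True then show ?thesis by (simp add: c_def)
  next
    case False
    then have "1 - 1 / real \<tau>0 > 0" "1 - 1 / real \<tau>0 \<le> 1" using tau by auto
    then show ?thesis unfolding c_def by simp
  qed
  have C0eq: "C0 = ln (real d) + ln (real \<tau>0) + (real \<tau>0 - 1) * c"
    unfolding C0_def c_def using entropy_id[OF tau] by simp
  have lnd: "ln (real d) \<ge> 0" "ln (real \<tau>0) \<ge> 0" using d tau by auto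
  have tc: "(real \<tau>0 - 1) * c \<ge> 0" using c0 tau by simp
  have C0nn: "C0 \<ge> 0" using C0eq lnd tc by linarith
  have second: "sqrt (real \<tau>0 / 2 * C0) \<le> sqrt (real \<tau>0 / 2 * ln (exp 1 * real d * real \<tau>0))"
  proof -
    have "ln (exp 1 * real d * real \<tau>0) = 1 + ln (real d) + ln (real \<tau>0)"
      using d tau by (simp add: ln_mult)
    moreover have "(real \<tau>0 - 1) * c \<le> 1" using entropy_le[OF tau] unfolding c_def .
    ultimately have "C0 \<le> ln (exp 1 * real d * real \<tau>0)" using C0eq by linarith
    then show ?thesis by (intro real_sqrt_le_mono mult_left_mono) auto
  qed
  define \<alpha> where "\<alpha> = 1 / real \<tau>0"
  have a0: "0 < \<alpha>" and a1: "\<alpha> \<le> 1" using tau by (auto simp: \<alpha>_def)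
  show ?thesis
  proof (cases "d = 1")
    case True
    have "\<forall>l :: nat \<Rightarrow> nat \<Rightarrow> real. (\<forall>t\<in>{1..T}. \<forall>j<d. 0 \<le> l t j \<and> l t j \<le> 1) \<longrightarrow>
        fs_adaptive_regret d 1 \<alpha> l T \<tau>0 \<le> sqrt (real \<tau>0 / 2 * C0)"
    proof (intro allI impI)
      fix l :: "nat \<Rightarrow> nat \<Rightarrow> real"
      have "fs_adaptive_regret d 1 \<alpha> l T \<tau>0 \<le> 0"
      proof (rule adaptive_le[OF T tau])
        fix r s
        show "fs_interval_regret d 1 \<alpha> l r s \<le> 0"
        proof (rule regret_le[OF d])
          have "fixed_share d 1 \<alpha> l t 0 = 1" for t
            using fs_basic[OF d a0 a1, of 1 l t] True by simp
          then show "\<forall>j<d. (\<Sum>t = r..s. \<Sum>i<d. fixed_share d 1 \<alpha> l t i * l t i) \<le> (\<Sum>t = r..s. l t j) + 0"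
            using True by simp
        qed
      qed
      also have "0 \<le> sqrt (real \<tau>0 / 2 * C0)" using C0nn by simp
      finally show "fs_adaptive_regret d 1 \<alpha> l T \<tau>0 \<le> sqrt (real \<tau>0 / 2 * C0)" .
    qed
    then show ?thesis using second a0 a1 unfolding C0_def[symmetric]
      by (intro exI[of _ 1] exI[of _ \<alpha>]) auto
  next
    case False
    then have "real d > 1" using d by simp
    then have "ln (real d) > 0" by simp
    then have C0pos: "C0 > 0" using C0eq lnd tc by linarith
    define S where "S = sqrt (real \<tau>0 / 2 * C0)"
    have Spos: "S > 0" unfolding S_def using C0pos tau by simp
    have S2: "S^2 = real \<tau>0 / 2 * C0" unfolding S_def using C0pos tau by simp
    define \<eta> where "\<eta> = 4 * S / real \<tau>0"
    have eta: "\<eta> > 0" unfolding \<eta>_def using Spos tau by simp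
    have B: "C0 / \<eta> + real \<tau>0 * \<eta> / 8 = S"
    proof -
      have "C0 * real \<tau>0 = 2 * S^2" using S2 by (simp add: algebra_simps)
      then show ?thesis unfolding \<eta>_def using Spos tau
        by (simp add: field_simps power2_eq_square)
    qed
    have "\<forall>l :: nat \<Rightarrow> nat \<Rightarrow> real. (\<forall>t\<in>{1..T}. \<forall>j<d. 0 \<le> l t j \<and> l t j \<le> 1) \<longrightarrow>
        fs_adaptive_regret d \<eta> \<alpha> l T \<tau>0 \<le> S"
    proof (intro allI impI)
      fix l :: "nat \<Rightarrow> nat \<Rightarrow> real"
      assume L: "\<forall>t\<in>{1..T}. \<forall>j<d. 0 \<le> l t j \<and> l t j \<le> 1"
      show "fs_adaptive_regret d \<eta> \<alpha> l T \<tau>0 \<le> S"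
      proof (rule adaptive_le[OF T tau])
        fix r s assume r: "1 \<le> r" and rs: "r \<le> s" and sT: "s \<le> T" and len: "s + 1 - r \<le> \<tau>0"
        have L': "\<forall>t\<in>{r..s}. \<forall>i<d. 0 \<le> l t i \<and> l t i \<le> 1" using L r sT by auto
        show "fs_interval_regret d \<eta> \<alpha> l r s \<le> S"
        proof (rule regret_le[OF d])
          show "\<forall>j<d. (\<Sum>t = r..s. \<Sum>i<d. fixed_share d \<eta> \<alpha> l t i * l t i) \<le> (\<Sum>t = r..s. l t j) + S"
          proof (intro allI impI)
            fix j assume j: "j < d"
            have "(\<Sum>t = r..s. \<Sum>i<d. fixed_share d \<eta> \<alpha> l t i * l t i)
                \<le> (\<Sum>t = r..s. l t j) + C0 / \<eta> + real \<tau>0 * \<eta> / 8"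
              using interval_final[OF d tau j eta r rs len L'] C0eq
              unfolding \<alpha>_def c_def by simp
            then show "(\<Sum>t = r..s. \<Sum>i<d. fixed_share d \<eta> \<alpha> l t i * l t i) \<le> (\<Sum>t = r..s. l t j) + S"
              using B by linarith
          qed
        qed
      qed
    qed
    then show ?thesis using second a0 a1 eta unfolding C0_def[symmetric] S_def
      by (intro exI[of _ \<eta>] exI[of _ \<alpha>]) auto
  qed
qed

end
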